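(* For every $h\in\{1,\dots,H-1\}$, the estimates produced by FORC satisfy $$\|\hat d^\pi_h-\bar d^\pi_h\|_1\le\|\hat d^\pi_{h-1}-\bar d^\pi_{h-1}\|_1+2C^{\mathbf x}_{h-1}\|\hat d^D_{h-1}-d^D_{h-1}\|_1+C^{\mathbf x}_{h-1}C^{\mathbf a}_{h-1}\|\hat d^{D,\dagger}_{h-1}-d^{D,\dagger}_{h-1}\|_1+\sqrt2\Big\|\hat w^\pi_h-\mathbf E^{\bar\pi}_{h-1}\Big(d^D_{h-1}\frac{\hat d^\pi_{h-1}\wedge C^{\mathbf x}_{h-1}\hat d^D_{h-1}}{\hat d^D_{h-1}}\Big)\Big\|_{2,d^{D,\dagger}_{h-1}},$$ where $\mathbf E^{\pi}_hd:=(\mathbf P^\pi_hd)/d^{D,\dagger}_h$.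
   Context: Setting: finite-horizon episodic MDP $(\mathcal X,\mathcal A,P,H)$, measurable $\mathcal X$, finite $\mathcal A$, $[H]=\{0,\dots,H-1\}$, known initial distribution $d_0$; $d^\pi_h$ density of $x_h$ under Markov policy $\pi$. Low-rank: $P_h(x'\mid x,a)=\langle\phi^*_h(x,a),\mu^*_h(x')\rangle$, $\phi^*_h,\mu^*_h\in\mathbb R^{\mathsf d}$, $\|\phi^*_h\|_\infty\le1$, $\int\|\mu^*_h\|_1\le B^\mu$; $\mu^*$ known. Notation: $a\wedge b=\min(a,b)$, $0/0:=0$; $(\mathbf P^\pi_hd)(x'):=\iint P_h(x'\mid x,a)\pi_h(a\mid x)d(x)\mathrm dx\,\mathrm da$ for nonnegative $\pi_h$; $\|g\|_{2,\nu}:=(\int g^2\,\mathrm d\nu)^{1/2}$. Offline data: $\mathcal D_h=\{(x_h^{(i)},a_h^{(i)},x_{h+1}^{(i)})\}$, tuples generated by an arbitrary roll-in to $x_h$, then $a_h\sim\pi^D_h(\cdot\mid x_h)$ (known Markov single-step policy), then $x_{h+1}\sim P_h$ (i.i.d. conditionally on earlier data); $d^D_h,d^{D,\dagger}_h$ marginal densities of $x_h,x_{h+1}$ in $\mathcal D_h$. Clipped occupancy: $\bar\pi_h:=\pi_h\wedge C^{\mathbf a}_h\pi^D_h$, $\bar d^\pi_0=d_0$, $\bar d^\pi_h=\mathbf P^{\bar\pi}_{h-1}(\bar d^\pi_{h-1}\wedge C^{\mathbf x}_{h-1}d^D_{h-1})$. Algorithm FORC: with $\mathcal F_h:=\{\langle\mu^*_{h-1},\theta\rangle\in\Delta(\mathcal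 X):\|\theta\|_\infty\le1\}$ and $\mathcal W_h:=\{w=\langle\mu^*_{h-1},\theta^{\rm up}\rangle/\langle\mu^*_{h-1},\theta^{\rm down}\rangle:\|w\|_\infty\le C^{\mathbf x}_{h-1}C^{\mathbf a}_{h-1}\}$, set $\hat d^\pi_0=d_0$; for $h=1,\dots,H$: split $\mathcal D_{h-1}$ randomly into $\mathcal D^{\rm mle}$ ($n_{\rm mle}$) and $\mathcal D^{\rm reg}$ ($n_{\rm reg}$); $\hat d^D_{h-1}\in\arg\max_{f\in\mathcal F_{h-1}}\sum_{\mathcal D^{\rm mle}}\log f(x^{(i)}_{h-1})$, $\hat d^{D,\dagger}_{h-1}\in\arg\max_{f\in\mathcal F_h}\sum_{\mathcal D^{\rm mle}}\log f(x^{(i)}_h)$; $\hat w^\pi_h\in\arg\min_{w\in\mathcal W_h}\frac1{n_{\rm reg}}\sum_{\mathcal D^{\rm reg}}\big(w(x^{(i)}_h)-\tilde w(x^{(i)}_{h-1})\frac{\bar\pi_{h-1}(a^{(i)}_{h-1}\mid x^{(i)}_{h-1})}{\pi^D_{h-1}(a^{(i)}_{h-1}\mid x^{(i)}_{h-1})}\big)^2$ with $\tilde w=(\hat d^\pi_{h-1}\wedge C^{\mathbf x}_{h-1}\hat d^D_{h-1})/\hat d^D_{h-1}$; $\hat d^\pi_h:=\hat w^\pi_h\hat d^{D,\dagger}_{h-1}$. *)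

theory Defs
  imports "HOL-Analysis.Analysis"
begin

text \<open>Densities are taken with respect to a fixed (sigma-finite) base measure M on the
  state space X.  Functions are real-valued; norms are valued in ennreal so that they are
  always defined (possibly infinite).\<close>

definition is_density :: "'x measure \<Rightarrow> ('x \<Rightarrow> real) \<Rightarrow> bool" where
  "is_density M f \<longleftrightarrow> f \<in> borel_measurable M \<and> (\<forall>x\<in>space M. 0 \<le> f x)
      \<and> (\<integral>\<^sup>+ x. ennreal (f x) \<partial>M) = 1"

definition is_policy :: "'x measure \<Rightarrow> ('x \<Rightarrow> 'a::finite \<Rightarrow> real) \<Rightarrow> bool" where
  "is_policy M p \<longleftrightarrow> (\<forall>a. (\<lambda>x. p x a) \<in> borel_measurable M)
      \<and> (\<forall>x\<in>space M. (\<forall>a. 0 \<le> p x a) \<and> (\<Sum>a\<in>UNIV. p x a) = 1)"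

definition lowrank_P :: "(nat \<Rightarrow> 'x \<Rightarrow> 'a \<Rightarrow> real^'d) \<Rightarrow> (nat \<Rightarrow> 'x \<Rightarrow> real^'d)
    \<Rightarrow> nat \<Rightarrow> 'x \<Rightarrow> 'a \<Rightarrow> 'x \<Rightarrow> real" where
  "lowrank_P \<phi> \<mu> h x a x' = \<phi> h x a \<bullet> \<mu> h x'"

definition Pop :: "'x measure \<Rightarrow> (nat \<Rightarrow> 'x \<Rightarrow> 'a::finite \<Rightarrow> 'x \<Rightarrow> real) \<Rightarrow> nat
    \<Rightarrow> ('x \<Rightarrow> 'a \<Rightarrow> real) \<Rightarrow> ('x \<Rightarrow> real) \<Rightarrow> 'x \<Rightarrow> real" where
  "Pop M P h p d x' = (\<integral> x. (\<Sum>a\<in>UNIV. P h x a x' * p x a) * d x \<partial>M)"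

text \<open>E^pi_h d := (P^pi_h d) / d^{D,dagger}_h  (with Isabelle's convention c/0 = 0).\<close>
definition Eop :: "'x measure \<Rightarrow> (nat \<Rightarrow> 'x \<Rightarrow> 'a::finite \<Rightarrow> 'x \<Rightarrow> real) \<Rightarrow> nat
    \<Rightarrow> ('x \<Rightarrow> 'a \<Rightarrow> real) \<Rightarrow> ('x \<Rightarrow> real) \<Rightarrow> ('x \<Rightarrow> real) \<Rightarrow> 'x \<Rightarrow> real" where
  "Eop M P h p dDd d x' = Pop M P h p d x' / dDd x'"

definition clip_pol :: "real \<Rightarrow> ('x \<Rightarrow> 'a \<Rightarrow> real) \<Rightarrow> ('x \<Rightarrow> 'a \<Rightarrow> real) \<Rightarrow> 'x \<Rightarrow> 'a \<Rightarrow> real" where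
  "clip_pol Ca p pD x a = min (p x a) (Ca * pD x a)"

primrec bar_d :: "'x measure \<Rightarrow> (nat \<Rightarrow> 'x \<Rightarrow> 'a::finite \<Rightarrow> 'x \<Rightarrow> real)
    \<Rightarrow> (nat \<Rightarrow> 'x \<Rightarrow> 'a \<Rightarrow> real) \<Rightarrow> (nat \<Rightarrow> 'x \<Rightarrow> 'a \<Rightarrow> real)
    \<Rightarrow> (nat \<Rightarrow> real) \<Rightarrow> (nat \<Rightarrow> real) \<Rightarrow> (nat \<Rightarrow> 'x \<Rightarrow> real) \<Rightarrow> ('x \<Rightarrow> real)
    \<Rightarrow> nat \<Rightarrow> 'x \<Rightarrow> real" where
  "bar_d M P \<pi> \<pi>D Cx Ca dD d0 0 = d0"
| "bar_d M P \<pi> \<pi>D Cx Ca dD d0 (Suc h) =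
     Pop M P h (clip_pol (Ca h) (\<pi> h) (\<pi>D h))
       (\<lambda>x. min (bar_d M P \<pi> \<pi>D Cx Ca dD d0 h x) (Cx h * dD h x))"

definition Fcls :: "'x measure \<Rightarrow> (nat \<Rightarrow> 'x \<Rightarrow> real^'d) \<Rightarrow> nat \<Rightarrow> ('x \<Rightarrow> real) set" where
  "Fcls M \<mu> h = {f. \<exists>\<theta>::real^'d. (\<forall>i. \<bar>\<theta> $ i\<bar> \<le> 1)
       \<and> f = (\<lambda>x. \<mu> (h - 1) x \<bullet> \<theta>) \<and> is_density M f}"

text \<open>The class used for the MLE at level k: F_k for k \<ge> 1, and a given class F0 of
  densities at level 0 (F_0 would need mu_{-1}).\<close>
definition Fcls_gen :: "'x measure \<Rightarrow> (nat \<Rightarrow> 'x \<Rightarrow> real^'d) \<Rightarrow> ('x \<Rightarrow> real) set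
    \<Rightarrow> nat \<Rightarrow> ('x \<Rightarrow> real) set" where
  "Fcls_gen M \<mu> F0 k = (if k = 0 then F0 else Fcls M \<mu> k)"

definition Wcls :: "'x measure \<Rightarrow> (nat \<Rightarrow> 'x \<Rightarrow> real^'d) \<Rightarrow> real \<Rightarrow> nat \<Rightarrow> ('x \<Rightarrow> real) set" where
  "Wcls M \<mu> C h = {w. \<exists>\<theta>u \<theta>d :: real^'d.
       (\<forall>i. \<bar>\<theta>u $ i\<bar> \<le> 1) \<and> (\<forall>i. \<bar>\<theta>d $ i\<bar> \<le> 1)
     \<and> (\<forall>x\<in>space M. 0 \<le> \<mu> (h - 1) x \<bullet> \<theta>u \<and> 0 \<le> \<mu> (h - 1) x \<bullet> \<theta>d)
     \<and> w = (\<lambda>x. (\<mu> (h - 1) x \<bullet> \<theta>u) / (\<mu> (h - 1) x \<bullet> \<theta>d))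
     \<and> (\<forall>x\<in>space M. \<bar>w x\<bar> \<le> C)}"

definition tilde_w :: "real \<Rightarrow> ('x \<Rightarrow> real) \<Rightarrow> ('x \<Rightarrow> real) \<Rightarrow> 'x \<Rightarrow> real" where
  "tilde_w Cx dh dDh x = min (dh x) (Cx * dDh x) / dDh x"

text \<open>Specification of the outputs of FORC (for one fixed realisation of the data and of the
  random split): dhat is \<open>hat d^pi\<close>, dDhat k = \<open>hat d^D_k\<close>, dDdhat k = \<open>hat d^{D,dagger}_k\<close>,
  what h = \<open>hat w^pi_h\<close>.  Maximising the log-likelihood is rendered as maximising the
  likelihood (product), which is the same with log 0 = -infinity.\<close>
definition forc_outputs ::
  "'x measure \<Rightarrow> (nat \<Rightarrow> 'x \<Rightarrow> real^'d) \<Rightarrow> ('x \<Rightarrow> real) set \<Rightarrow> nat \<Rightarrow> ('x \<Rightarrow> real)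
   \<Rightarrow> (nat \<Rightarrow> real) \<Rightarrow> (nat \<Rightarrow> real) \<Rightarrow> (nat \<Rightarrow> 'x \<Rightarrow> 'a \<Rightarrow> real) \<Rightarrow> (nat \<Rightarrow> 'x \<Rightarrow> 'a \<Rightarrow> real)
   \<Rightarrow> (nat \<Rightarrow> ('x \<times> 'a \<times> 'x) list) \<Rightarrow> (nat \<Rightarrow> ('x \<times> 'a \<times> 'x) list) \<Rightarrow> (nat \<Rightarrow> ('x \<times> 'a \<times> 'x) list)
   \<Rightarrow> (nat \<Rightarrow> 'x \<Rightarrow> real) \<Rightarrow> (nat \<Rightarrow> 'x \<Rightarrow> real) \<Rightarrow> (nat \<Rightarrow> 'x \<Rightarrow> real) \<Rightarrow> (nat \<Rightarrow> 'x \<Rightarrow> real)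
   \<Rightarrow> bool" where
  "forc_outputs M \<mu> F0 H d0 Cx Ca \<pi> \<pi>D D Dmle Dreg dDhat dDdhat what dhat \<longleftrightarrow>
     dhat 0 = d0 \<and>
     (\<forall>h\<in>{1..H}.
        mset (Dmle (h - 1)) + mset (Dreg (h - 1)) = mset (D (h - 1))
      \<and> is_arg_max (\<lambda>f. prod_list (map (\<lambda>(x, a, x'). f x) (Dmle (h - 1))))
                   (\<lambda>f. f \<in> Fcls_gen M \<mu> F0 (h - 1)) (dDhat (h - 1))
      \<and> is_arg_max (\<lambda>f. prod_list (map (\<lambda>(x, a, x'). f x') (Dmle (h - 1))))
                   (\<lambda>f. f \<in> Fcls M \<mu> h) (dDdhat (h - 1))
      \<and> is_arg_min (\<lambda>w. sum_list (map (\<lambda>(x, a, x').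
                        (w x' - tilde_w (Cx (h - 1)) (dhat (h - 1)) (dDhat (h - 1)) x
                           * clip_pol (Ca (h - 1)) (\<pi> (h - 1)) (\<pi>D (h - 1)) x a
                           / \<pi>D (h - 1) x a)\<^sup>2) (Dreg (h - 1)))
                     / real (length (Dreg (h - 1))))
                   (\<lambda>w. w \<in> Wcls M \<mu> (Cx (h - 1) * Ca (h - 1)) h) (what h)
      \<and> dhat h = (\<lambda>x. what h x * dDdhat (h - 1) x))"

definition norm1 :: "'x measure \<Rightarrow> ('x \<Rightarrow> real) \<Rightarrow> ('x \<Rightarrow> real) \<Rightarrow> ennreal" where
  "norm1 M f g = (\<integral>\<^sup>+ x. ennreal \<bar>f x - g x\<bar> \<partial>M)"

definition ennsqrt :: "ennreal \<Rightarrow> ennreal" where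
  "ennsqrt e = (if e = \<infinity> then \<infinity> else ennreal (sqrt (enn2real e)))"

definition norm2 :: "'x measure \<Rightarrow> ('x \<Rightarrow> real) \<Rightarrow> ennreal" where
  "norm2 \<nu> g = ennsqrt (\<integral>\<^sup>+ x. ennreal ((g x)\<^sup>2) \<partial>\<nu>)"

end

theory Submission
  imports Defs
begin
lemma nn_kernel_tonelli:
  fixes K :: "'x \<Rightarrow> 'x \<Rightarrow> real" and u :: "'x \<Rightarrow> ennreal"
  assumes sf: "sigma_finite_measure M"
    and Km: "(\<lambda>(x, x'). K x x') \<in> borel_measurable (M \<Otimes>\<^sub>M M)"
    and K1: "\<And>x. x \<in> space M \<Longrightarrow> (\<integral>\<^sup>+x'. ennreal (K x x') \<partial>M) \<le> 1"
    and um: "u \<in> borel_measurable M"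
  shows "(\<integral>\<^sup>+x'. (\<integral>\<^sup>+x. ennreal (K x x') * u x \<partial>M) \<partial>M) \<le> (\<integral>\<^sup>+x. u x \<partial>M)"
proof -
  interpret pair_sigma_finite M M using sf by (simp add: pair_sigma_finite_def)
  have Km': "(\<lambda>p. K (fst p) (snd p)) \<in> borel_measurable (M \<Otimes>\<^sub>M M)"
    using Km by (simp add: case_prod_beta')
  have "(\<integral>\<^sup>+x'. (\<integral>\<^sup>+x. ennreal (K x x') * u x \<partial>M) \<partial>M) = (\<integral>\<^sup>+x. (\<integral>\<^sup>+x'. ennreal (K x x') * u x \<partial>M) \<partial>M)"
    by (rule Fubini') (use Km' um in measurable)
  also have "\<dots> \<le> (\<integral>\<^sup>+x. u x \<partial>M)"
  proof (intro nn_integral_mono)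
    fix x assume x: "x \<in> space M"
    have m: "(\<lambda>x'. K x x') \<in> borel_measurable M"
      using measurable_Pair2[OF Km' x] by simp
    have "(\<integral>\<^sup>+x'. ennreal (K x x') * u x \<partial>M) = (\<integral>\<^sup>+x'. ennreal (K x x') \<partial>M) * u x"
      by (rule nn_integral_multc) (use m in measurable)
    also have "\<dots> \<le> 1 * u x" by (intro mult_right_mono K1 x) simp
    finally show "(\<integral>\<^sup>+x'. ennreal (K x x') * u x \<partial>M) \<le> u x" by simp
  qed
  finally show ?thesis .
qed
lemma kernel_diff:
  fixes K :: "'x \<Rightarrow> 'x \<Rightarrow> real" and f g :: "'x \<Rightarrow> real"
  assumes sf: "sigma_finite_measure M"
    and Km: "(\<lambda>(x, x'). K x x') \<in> borel_measurable (M \<Otimes>\<^sub>M M)"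
    and K0: "\<And>x x'. x \<in> space M \<Longrightarrow> x' \<in> space M \<Longrightarrow> 0 \<le> K x x'"
    and K1: "\<And>x. x \<in> space M \<Longrightarrow> (\<integral>\<^sup>+x'. ennreal (K x x') \<partial>M) \<le> 1"
    and fm: "f \<in> borel_measurable M" and gm: "g \<in> borel_measurable M"
    and fi: "\<And>x'. x' \<in> space M \<Longrightarrow> integrable M (\<lambda>x. K x x' * f x)"
    and gi: "\<And>x'. x' \<in> space M \<Longrightarrow> integrable M (\<lambda>x. K x x' * g x)"
  shows "(\<integral>\<^sup>+x'. ennreal \<bar>(\<integral>x. K x x' * f x \<partial>M) - (\<integral>x. K x x' * g x \<partial>M)\<bar> \<partial>M)
     \<le> (\<integral>\<^sup>+x. ennreal \<bar>f x - g x\<bar> \<partial>M)"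
proof -
  have "(\<integral>\<^sup>+x'. ennreal \<bar>(\<integral>x. K x x' * f x \<partial>M) - (\<integral>x. K x x' * g x \<partial>M)\<bar> \<partial>M)
     \<le> (\<integral>\<^sup>+x'. (\<integral>\<^sup>+x. ennreal (K x x') * ennreal \<bar>f x - g x\<bar> \<partial>M) \<partial>M)"
  proof (rule nn_integral_mono)
    fix x' assume x': "x' \<in> space M"
    have i: "integrable M (\<lambda>x. K x x' * f x - K x x' * g x)"
      using fi[OF x'] gi[OF x'] by (rule Bochner_Integration.integrable_diff)
    have "(\<integral>x. K x x' * f x \<partial>M) - (\<integral>x. K x x' * g x \<partial>M) = (\<integral>x. K x x' * f x - K x x' * g x \<partial>M)"
      using fi[OF x'] gi[OF x'] by (simp add: Bochner_Integration.integral_diff)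
    then have "ennreal \<bar>(\<integral>x. K x x' * f x \<partial>M) - (\<integral>x. K x x' * g x \<partial>M)\<bar>
        = ennreal (norm (\<integral>x. K x x' * f x - K x x' * g x \<partial>M))" by simp
    also have "\<dots> \<le> (\<integral>\<^sup>+x. norm (K x x' * f x - K x x' * g x) \<partial>M)"
      using i by (rule integral_norm_bound_ennreal)
    also have "\<dots> = (\<integral>\<^sup>+x. ennreal (K x x') * ennreal \<bar>f x - g x\<bar> \<partial>M)"
    proof (rule nn_integral_cong)
      fix x assume x: "x \<in> space M"
      have "norm (K x x' * f x - K x x' * g x) = K x x' * \<bar>f x - g x\<bar>"
        using K0[OF x x'] by (simp add: abs_mult right_diff_distrib[symmetric])
      then show "ennreal (norm (K x x' * f x - K x x' * g x)) = ennreal (K x x') * ennreal \<bar>f x - g x\<bar>"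
        using K0[OF x x'] by (simp add: ennreal_mult)
    qed
    finally show "ennreal \<bar>(\<integral>x. K x x' * f x \<partial>M) - (\<integral>x. K x x' * g x \<partial>M)\<bar>
        \<le> (\<integral>\<^sup>+x. ennreal (K x x') * ennreal \<bar>f x - g x\<bar> \<partial>M)" .
  qed
  also have "\<dots> \<le> (\<integral>\<^sup>+x. ennreal \<bar>f x - g x\<bar> \<partial>M)"
    by (rule nn_kernel_tonelli[OF sf Km K1]) (use fm gm in measurable)
  finally show ?thesis .
qed

lemma l1_le_l2:
  fixes g :: "'x \<Rightarrow> real"
  assumes e: "emeasure N (space N) \<le> 1" and gm: "g \<in> borel_measurable N"
  shows "(\<integral>\<^sup>+x. ennreal \<bar>g x\<bar> \<partial>N) \<le> ennsqrt (\<integral>\<^sup>+x. ennreal ((g x)\<^sup>2) \<partial>N)"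
proof -
  define X where "X = (\<integral>\<^sup>+x. ennreal \<bar>g x\<bar> \<partial>N)"
  define Y where "Y = (\<integral>\<^sup>+x. ennreal ((g x)\<^sup>2) \<partial>N)"
  have "X\<^sup>2 \<le> (\<integral>\<^sup>+x. (ennreal \<bar>g x\<bar>)^2 \<partial>N) * (\<integral>\<^sup>+x. (1::ennreal)^2 \<partial>N)"
    using Cauchy_Schwarz_nn_integral[of "\<lambda>x. ennreal \<bar>g x\<bar>" N "\<lambda>_. 1"] gm
    unfolding X_def by simp
  also have "(\<integral>\<^sup>+x. (ennreal \<bar>g x\<bar>)^2 \<partial>N) = Y"
    unfolding Y_def by (intro nn_integral_cong) (simp add: ennreal_power)
  also have "(\<integral>\<^sup>+x. (1::ennreal)^2 \<partial>N) = emeasure N (space N)" by simp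
  also have "Y * emeasure N (space N) \<le> Y * 1" by (intro mult_left_mono e) simp
  finally have XY: "X\<^sup>2 \<le> Y" by simp
  show ?thesis
  proof (cases "Y = \<infinity>")
    case True then show ?thesis by (simp add: ennsqrt_def Y_def)
  next
    case False
    then obtain y where y: "Y = ennreal y" "0 \<le> y" by (cases Y) auto
    have "X \<noteq> \<infinity>" using XY y by (auto simp: power2_eq_square top_unique)
    then obtain x where x: "X = ennreal x" "0 \<le> x" by (cases X) auto
    have "x\<^sup>2 \<le> y" using XY x y by (simp add: ennreal_power)
    then have "x \<le> sqrt y" using x(2) by (simp add: real_le_rsqrt)
    then show ?thesis using x y False unfolding X_def[symmetric] Y_def[symmetric]
      by (simp add: ennsqrt_def)
  qed
qed
lemma K_meas:
  fixes \<phi> :: "nat \<Rightarrow> 'x \<Rightarrow> 'a::finite \<Rightarrow> real^'d" and \<mu> :: "nat \<Rightarrow> 'x \<Rightarrow> real^'d"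
  assumes [measurable]: "\<And>a. (\<lambda>x. \<phi> k x a) \<in> borel_measurable M" "\<mu> k \<in> borel_measurable M"
    "\<And>a. (\<lambda>x. p x a) \<in> borel_measurable M"
  shows "(\<lambda>(x, x'). \<Sum>a\<in>UNIV. lowrank_P \<phi> \<mu> k x a x' * p x a) \<in> borel_measurable (M \<Otimes>\<^sub>M M)"
  unfolding lowrank_P_def by measurable

lemma K_meas2:
  fixes \<phi> :: "nat \<Rightarrow> 'x \<Rightarrow> 'a::finite \<Rightarrow> real^'d" and \<mu> :: "nat \<Rightarrow> 'x \<Rightarrow> real^'d"
  assumes [measurable]: "\<And>a. (\<lambda>x. \<phi> k x a) \<in> borel_measurable M" "\<mu> k \<in> borel_measurable M"
    "\<And>a. (\<lambda>x. p x a) \<in> borel_measurable M" "d \<in> borel_measurable M"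
  shows "(\<lambda>(x', x). (\<Sum>a\<in>UNIV. lowrank_P \<phi> \<mu> k x a x' * p x a) * d x) \<in> borel_measurable (M \<Otimes>\<^sub>M M)"
  unfolding lowrank_P_def by measurable

lemma K_meas1:
  fixes \<phi> :: "nat \<Rightarrow> 'x \<Rightarrow> 'a::finite \<Rightarrow> real^'d" and \<mu> :: "nat \<Rightarrow> 'x \<Rightarrow> real^'d"
  assumes [measurable]: "\<And>a. (\<lambda>x. \<phi> k x a) \<in> borel_measurable M"
    "\<And>a. (\<lambda>x. p x a) \<in> borel_measurable M"
  shows "(\<lambda>x. \<Sum>a\<in>UNIV. lowrank_P \<phi> \<mu> k x a x' * p x a) \<in> borel_measurable M"
  unfolding lowrank_P_def by measurable

lemma Pop_meas:
  fixes \<phi> :: "nat \<Rightarrow> 'x \<Rightarrow> 'a::finite \<Rightarrow> real^'d" and \<mu> :: "nat \<Rightarrow> 'x \<Rightarrow> real^'d"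
  assumes sf: "sigma_finite_measure M"
    and "\<And>a. (\<lambda>x. \<phi> k x a) \<in> borel_measurable M" "\<mu> k \<in> borel_measurable M"
    "\<And>a. (\<lambda>x. p x a) \<in> borel_measurable M" "d \<in> borel_measurable M"
  shows "Pop M (lowrank_P \<phi> \<mu>) k p d \<in> borel_measurable M"
proof -
  interpret sigma_finite_measure M by (rule sf)
  show ?thesis unfolding Pop_def
    by (rule borel_measurable_lebesgue_integral[where f="\<lambda>x' x. (\<Sum>a\<in>UNIV. lowrank_P \<phi> \<mu> k x a x' * p x a) * d x"])
      (intro K_meas2 assms)
qed

lemma Pop_nonneg:
  assumes "\<And>x a. x \<in> space M \<Longrightarrow> 0 \<le> P k x a x'"
    "\<And>x a. x \<in> space M \<Longrightarrow> 0 \<le> p x a" "\<And>x. x \<in> space M \<Longrightarrow> 0 \<le> d x"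
  shows "0 \<le> Pop M P k p d x'"
  unfolding Pop_def using assms
  by (intro integral_nonneg_AE AE_I2 mult_nonneg_nonneg sum_nonneg) auto

lemma K_int1:
  fixes \<phi> :: "nat \<Rightarrow> 'x \<Rightarrow> 'a::finite \<Rightarrow> real^'d" and \<mu> :: "nat \<Rightarrow> 'x \<Rightarrow> real^'d"
  assumes x: "x \<in> space M"
    and mu[measurable]: "\<mu> k \<in> borel_measurable M"
    and P0: "\<And>a x'. x' \<in> space M \<Longrightarrow> 0 \<le> lowrank_P \<phi> \<mu> k x a x'"
    and P1: "\<And>a. (\<integral>\<^sup>+x'. ennreal (lowrank_P \<phi> \<mu> k x a x') \<partial>M) = 1"
    and p0: "\<And>a. 0 \<le> p x a" and p1: "(\<Sum>a\<in>UNIV. p x a) \<le> 1"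
  shows "(\<integral>\<^sup>+x'. ennreal (\<Sum>a\<in>UNIV. lowrank_P \<phi> \<mu> k x a x' * p x a) \<partial>M) \<le> 1"
proof -
  have "(\<integral>\<^sup>+x'. ennreal (\<Sum>a\<in>UNIV. lowrank_P \<phi> \<mu> k x a x' * p x a) \<partial>M)
      = (\<integral>\<^sup>+x'. (\<Sum>a\<in>UNIV. ennreal (p x a) * ennreal (lowrank_P \<phi> \<mu> k x a x')) \<partial>M)"
  proof (rule nn_integral_cong)
    fix x' assume x': "x' \<in> space M"
    show "ennreal (\<Sum>a\<in>UNIV. lowrank_P \<phi> \<mu> k x a x' * p x a)
        = (\<Sum>a\<in>UNIV. ennreal (p x a) * ennreal (lowrank_P \<phi> \<mu> k x a x'))"
      using P0[OF x'] p0 by (simp add: ennreal_mult[symmetric] mult.commute)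
  qed
  also have "\<dots> = (\<Sum>a\<in>UNIV. ennreal (p x a) * (\<integral>\<^sup>+x'. ennreal (lowrank_P \<phi> \<mu> k x a x') \<partial>M))"
  proof -
    have m: "(\<lambda>x'. ennreal (lowrank_P \<phi> \<mu> k x a x')) \<in> borel_measurable M" for a
      unfolding lowrank_P_def by measurable
    have m2: "(\<lambda>x'. ennreal (p x a) * ennreal (lowrank_P \<phi> \<mu> k x a x')) \<in> borel_measurable M" for a
      using m by measurable
    show ?thesis using m m2 by (simp add: nn_integral_sum nn_integral_cmult)
  qed
  also have "\<dots> = ennreal (\<Sum>a\<in>UNIV. p x a)" using P1 p0 by simp
  also have "\<dots> \<le> 1" using p1 by simp
  finally show ?thesis .
qed

lemma K_bound:
  fixes \<phi> :: "nat \<Rightarrow> 'x \<Rightarrow> 'a::finite \<Rightarrow> real^'d" and \<mu> :: "nat \<Rightarrow> 'x \<Rightarrow> real^'d"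
  assumes phi: "\<And>a i. \<bar>\<phi> k x a $ i\<bar> \<le> 1"
    and p0: "\<And>a. 0 \<le> p x a" and p1: "(\<Sum>a\<in>UNIV. p x a) \<le> 1"
  shows "\<bar>\<Sum>a\<in>UNIV. lowrank_P \<phi> \<mu> k x a x' * p x a\<bar> \<le> (\<Sum>i\<in>UNIV. \<bar>\<mu> k x' $ i\<bar>)"
proof -
  define S where "S = (\<Sum>i\<in>UNIV. \<bar>\<mu> k x' $ i\<bar>)"
  have PS: "\<bar>lowrank_P \<phi> \<mu> k x a x'\<bar> \<le> S" for a
  proof -
    have "\<bar>lowrank_P \<phi> \<mu> k x a x'\<bar> = \<bar>\<Sum>i\<in>UNIV. \<phi> k x a $ i * \<mu> k x' $ i\<bar>"
      by (simp add: lowrank_P_def inner_vec_def)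
    also have "\<dots> \<le> (\<Sum>i\<in>UNIV. \<bar>\<phi> k x a $ i * \<mu> k x' $ i\<bar>)" by (rule sum_abs)
    also have "\<dots> \<le> S" unfolding S_def
      by (intro sum_mono) (simp add: abs_mult mult_left_le_one_le phi)
    finally show ?thesis .
  qed
  have "\<bar>\<Sum>a\<in>UNIV. lowrank_P \<phi> \<mu> k x a x' * p x a\<bar> \<le> (\<Sum>a\<in>UNIV. \<bar>lowrank_P \<phi> \<mu> k x a x' * p x a\<bar>)"
    by (rule sum_abs)
  also have "\<dots> \<le> (\<Sum>a\<in>UNIV. S * p x a)"
    by (intro sum_mono) (simp add: abs_mult p0 mult_right_mono PS)
  also have "\<dots> = S * (\<Sum>a\<in>UNIV. p x a)" by (simp add: sum_distrib_left)
  also have "\<dots> \<le> S * 1" using p1 by (intro mult_left_mono) (auto simp: S_def)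
  finally show ?thesis by (simp add: S_def)
qed

lemma K_integrable:
  fixes K f d :: "'x \<Rightarrow> real"
  assumes d: "integrable M d" and fm: "f \<in> borel_measurable M" and Km: "K \<in> borel_measurable M"
    and KS: "\<And>x. x \<in> space M \<Longrightarrow> \<bar>K x\<bar> \<le> S"
    and fC: "\<And>x. x \<in> space M \<Longrightarrow> \<bar>f x\<bar> \<le> C * d x"
  shows "integrable M (\<lambda>x. K x * f x)"
proof (rule Bochner_Integration.integrable_bound[where f="\<lambda>x. S * (C * d x)"])
  show "integrable M (\<lambda>x. S * (C * d x))" using d by simp
  show "(\<lambda>x. K x * f x) \<in> borel_measurable M" using Km fm by measurable
  show "AE x in M. norm (K x * f x) \<le> norm (S * (C * d x))"
  proof (rule AE_I2)
    fix x assume x: "x \<in> space M"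
    have "norm (K x * f x) = \<bar>K x\<bar> * \<bar>f x\<bar>" by (simp add: abs_mult)
    also have "\<dots> \<le> S * (C * d x)" using KS[OF x] fC[OF x] by (intro mult_mono) auto
    also have "\<dots> \<le> norm (S * (C * d x))" by simp
    finally show "norm (K x * f x) \<le> norm (S * (C * d x))" .
  qed
qed
lemma pw_ineq:
  fixes a e d b C :: real
  assumes a: "0 \<le> a" and e: "0 \<le> e" and d: "0 \<le> d" and C: "0 \<le> C"
  shows "\<bar>a * (min d (C * e) / e) - min b (C * a)\<bar> \<le> 2 * C * \<bar>e - a\<bar> + \<bar>d - b\<bar>"
proof (cases "e = 0")
  case True
  then show ?thesis using a d C by (auto simp: abs_if min_def)
next
  case False
  then have ep: "0 < e" using e by simp
  define t where "t = min d (C * e) / e"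
  have te: "t * e = min d (C * e)" using ep by (simp add: t_def)
  have t0: "0 \<le> t" using d C e by (simp add: t_def)
  have tC: "t \<le> C" using ep by (simp add: t_def divide_le_eq)
  have "\<bar>t * (a - e)\<bar> \<le> C * \<bar>e - a\<bar>"
    using t0 tC by (simp add: abs_mult abs_minus_commute mult_right_mono)
  moreover have "\<bar>min d (C * e) - min d (C * a)\<bar> \<le> C * \<bar>e - a\<bar>"
  proof -
    have "\<bar>min d (C * e) - min d (C * a)\<bar> \<le> \<bar>C * e - C * a\<bar>" by (simp add: min_def abs_if)
    also have "\<dots> = C * \<bar>e - a\<bar>" using C by (simp add: abs_mult right_diff_distrib[symmetric])
    finally show ?thesis .
  qed
  moreover have "\<bar>min d (C * a) - min b (C * a)\<bar> \<le> \<bar>d - b\<bar>"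
    by (auto simp: min_def abs_if)
  ultimately show ?thesis unfolding t_def[symmetric] using te
    by (smt (verit) mult.commute right_diff_distrib)
qed
lemma Wcls_props:
  assumes "w \<in> Wcls M \<mu> C j" and [measurable]: "\<mu> (j - 1) \<in> borel_measurable M"
  shows "w \<in> borel_measurable M" "\<And>x. x \<in> space M \<Longrightarrow> 0 \<le> w x" "\<And>x. x \<in> space M \<Longrightarrow> \<bar>w x\<bar> \<le> C"
proof -
  obtain tu td where t: "\<forall>x\<in>space M. 0 \<le> \<mu> (j - 1) x \<bullet> tu \<and> 0 \<le> \<mu> (j - 1) x \<bullet> td"
    "w = (\<lambda>x. (\<mu> (j - 1) x \<bullet> tu) / (\<mu> (j - 1) x \<bullet> td))" "\<forall>x\<in>space M. \<bar>w x\<bar> \<le> C"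
    using assms(1) unfolding Wcls_def by blast
  show "w \<in> borel_measurable M" unfolding t(2) by measurable
  show "\<And>x. x \<in> space M \<Longrightarrow> 0 \<le> w x" using t(1) unfolding t(2) by simp
  show "\<And>x. x \<in> space M \<Longrightarrow> \<bar>w x\<bar> \<le> C" using t(3) by blast
qed

lemma Fcls_dens: "f \<in> Fcls M \<mu> j \<Longrightarrow> is_density M f"
  unfolding Fcls_def by blast

lemma dens_props:
  assumes "is_density M f"
  shows "f \<in> borel_measurable M" "\<And>x. x \<in> space M \<Longrightarrow> 0 \<le> f x" "integrable M f"
    "(\<integral>\<^sup>+x. ennreal (f x) \<partial>M) = 1"
proof -
  show fm: "f \<in> borel_measurable M" and f0: "\<And>x. x \<in> space M \<Longrightarrow> 0 \<le> f x"
    and f1: "(\<integral>\<^sup>+x. ennreal (f x) \<partial>M) = 1"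
    using assms by (auto simp: is_density_def)
  show "integrable M f"
    using fm f0 f1 by (intro integrableI_nonneg) (auto intro!: AE_I2)
qed

theorem lemma1:
  fixes M :: "'x measure"
    and \<phi> :: "nat \<Rightarrow> 'x \<Rightarrow> 'a::finite \<Rightarrow> real^'d"
    and \<mu> :: "nat \<Rightarrow> 'x \<Rightarrow> real^'d"
    and B\<mu> :: real and H :: nat and d0 :: "'x \<Rightarrow> real"
    and \<pi> \<pi>D :: "nat \<Rightarrow> 'x \<Rightarrow> 'a \<Rightarrow> real"
    and Cx Ca :: "nat \<Rightarrow> real"
    and dD dDd :: "nat \<Rightarrow> 'x \<Rightarrow> real"
    and F0 :: "('x \<Rightarrow> real) set"
    and D Dmle Dreg :: "nat \<Rightarrow> ('x \<times> 'a \<times> 'x) list"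
    and dDhat dDdhat what dhat :: "nat \<Rightarrow> 'x \<Rightarrow> real"
    and h :: nat
  assumes "sigma_finite_measure M"
    \<comment> \<open>low-rank MDP with proper transition densities\<close>
    and "\<And>k a. k < H \<Longrightarrow> (\<lambda>x. \<phi> k x a) \<in> borel_measurable M"
    and "\<And>k. k < H \<Longrightarrow> \<mu> k \<in> borel_measurable M"
    and "\<And>k x a i. k < H \<Longrightarrow> \<bar>\<phi> k x a $ i\<bar> \<le> 1"
    and "\<And>k. k < H \<Longrightarrow> (\<integral>\<^sup>+ x'. ennreal (\<Sum>i\<in>UNIV. \<bar>\<mu> k x' $ i\<bar>) \<partial>M) \<le> ennreal B\<mu>"
    and "\<And>k x a x'. k < H \<Longrightarrow> x \<in> space M \<Longrightarrow> x' \<in> space M \<Longrightarrow> 0 \<le> lowrank_P \<phi> \<mu> k x a x'"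
    and "\<And>k x a. k < H \<Longrightarrow> x \<in> space M \<Longrightarrow>
           (\<integral>\<^sup>+ x'. ennreal (lowrank_P \<phi> \<mu> k x a x') \<partial>M) = 1"
    \<comment> \<open>initial distribution, target and data policies, clipping constants\<close>
    and "is_density M d0"
    and "\<And>k. k < H \<Longrightarrow> is_policy M (\<pi> k)"
    and "\<And>k. k < H \<Longrightarrow> is_policy M (\<pi>D k)"
    and "\<And>k. 0 \<le> Cx k" and "\<And>k. 0 \<le> Ca k"
    \<comment> \<open>data densities: x_k ~ dD k, a_k ~ piD_k, x_{k+1} ~ P_k\<close>
    and "\<And>k. k < H \<Longrightarrow> is_density M (dD k)"
    and "\<And>k. k < H \<Longrightarrow> dDd k = Pop M (lowrank_P \<phi> \<mu>) k (\<pi>D k) (dD k)"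
    \<comment> \<open>the outputs of FORC\<close>
    and "F0 \<subseteq> {f. is_density M f}"
    and "forc_outputs M \<mu> F0 H d0 Cx Ca \<pi> \<pi>D D Dmle Dreg dDhat dDdhat what dhat"
    and "h \<in> {1..H - 1}"
  shows "norm1 M (dhat h) (bar_d M (lowrank_P \<phi> \<mu>) \<pi> \<pi>D Cx Ca dD d0 h)
   \<le> norm1 M (dhat (h - 1)) (bar_d M (lowrank_P \<phi> \<mu>) \<pi> \<pi>D Cx Ca dD d0 (h - 1))
     + ennreal (2 * Cx (h - 1)) * norm1 M (dDhat (h - 1)) (dD (h - 1))
     + ennreal (Cx (h - 1) * Ca (h - 1)) * norm1 M (dDdhat (h - 1)) (dDd (h - 1))
     + ennreal (sqrt 2) * norm2 (density M (\<lambda>x. ennreal (dDd (h - 1) x)))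
         (\<lambda>x'. what h x' - Eop M (lowrank_P \<phi> \<mu>) (h - 1)
                   (clip_pol (Ca (h - 1)) (\<pi> (h - 1)) (\<pi>D (h - 1))) (dDd (h - 1))
                   (\<lambda>x. dD (h - 1) x * tilde_w (Cx (h - 1)) (dhat (h - 1)) (dDhat (h - 1)) x) x')"
proof -
  note sfM = assms(1)
  interpret sigma_finite_measure M by (rule sfM)
  define k where "k = h - 1"
  have hk: "h = Suc k" and kH: "k < H" and hH: "h \<in> {1..H}"
    using assms(17) by (auto simp: k_def)
  define P where "P = lowrank_P \<phi> \<mu>"
  note forc = assms(16)[unfolded forc_outputs_def]
  have fh: "is_arg_max (\<lambda>f. prod_list (map (\<lambda>(x, a, x'). f x) (Dmle k)))
                   (\<lambda>f. f \<in> Fcls_gen M \<mu> F0 k) (dDhat k)"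
    "is_arg_max (\<lambda>f. prod_list (map (\<lambda>(x, a, x'). f x') (Dmle k)))
                   (\<lambda>f. f \<in> Fcls M \<mu> h) (dDdhat k)"
    "is_arg_min (\<lambda>w. sum_list (map (\<lambda>(x, a, x').
                        (w x' - tilde_w (Cx k) (dhat k) (dDhat k) x
                           * clip_pol (Ca k) (\<pi> k) (\<pi>D k) x a
                           / \<pi>D k x a)\<^sup>2) (Dreg k))
                     / real (length (Dreg k)))
                   (\<lambda>w. w \<in> Wcls M \<mu> (Cx k * Ca k) h) (what h)"
    "dhat h = (\<lambda>x. what h x * dDdhat k x)"
    using forc hH unfolding k_def by blast+
  have W: "what h \<in> Wcls M \<mu> (Cx k * Ca k) h" and Fd: "dDdhat k \<in> Fcls M \<mu> h"
    and Fg: "dDhat k \<in> Fcls_gen M \<mu> F0 k" and dhh: "dhat h = (\<lambda>x. what h x * dDdhat k x)"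
    using fh by (auto simp: is_arg_max_def is_arg_min_def)
  have phim[measurable]: "\<And>a. (\<lambda>x. \<phi> k x a) \<in> borel_measurable M" using assms(2) kH by blast
  have mum[measurable]: "\<mu> k \<in> borel_measurable M" using assms(3) kH by blast
  have pol: "is_policy M (\<pi> k)" "is_policy M (\<pi>D k)" using assms(9,10) kH by auto
  have pim[measurable]: "\<And>a. (\<lambda>x. \<pi> k x a) \<in> borel_measurable M"
    and piDm[measurable]: "\<And>a. (\<lambda>x. \<pi>D k x a) \<in> borel_measurable M"
    using pol by (auto simp: is_policy_def)
  have pi0: "\<And>x a. x \<in> space M \<Longrightarrow> 0 \<le> \<pi> k x a" and pi1: "\<And>x. x \<in> space M \<Longrightarrow> (\<Sum>a\<in>UNIV. \<pi> k x a) = 1"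
    and piD0: "\<And>x a. x \<in> space M \<Longrightarrow> 0 \<le> \<pi>D k x a" and piD1: "\<And>x. x \<in> space M \<Longrightarrow> (\<Sum>a\<in>UNIV. \<pi>D k x a) = 1"
    using pol by (auto simp: is_policy_def)
  define c where "c = clip_pol (Ca k) (\<pi> k) (\<pi>D k)"
  have cm[measurable]: "\<And>a. (\<lambda>x. c x a) \<in> borel_measurable M" unfolding c_def clip_pol_def by measurable
  have c0: "\<And>x a. x \<in> space M \<Longrightarrow> 0 \<le> c x a"
    unfolding c_def clip_pol_def using pi0 piD0 assms(12) by simp
  have cpi: "\<And>x a. c x a \<le> \<pi> k x a" and cpiD: "\<And>x a. c x a \<le> Ca k * \<pi>D k x a"
    unfolding c_def clip_pol_def by auto
  have c1: "\<And>x. x \<in> space M \<Longrightarrow> (\<Sum>a\<in>UNIV. c x a) \<le> 1"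
  proof -
    fix x assume "x \<in> space M"
    have "(\<Sum>a\<in>UNIV. c x a) \<le> (\<Sum>a\<in>UNIV. \<pi> k x a)" by (intro sum_mono cpi)
    then show "(\<Sum>a\<in>UNIV. c x a) \<le> 1" using pi1[OF \<open>x \<in> space M\<close>] by simp
  qed
  have piD1': "\<And>x. x \<in> space M \<Longrightarrow> (\<Sum>a\<in>UNIV. \<pi>D k x a) \<le> 1" using piD1 by simp
  have P0: "\<And>x a x'. x \<in> space M \<Longrightarrow> x' \<in> space M \<Longrightarrow> 0 \<le> lowrank_P \<phi> \<mu> k x a x'"
    using assms(6) kH by blast
  have P1: "\<And>x a. x \<in> space M \<Longrightarrow> (\<integral>\<^sup>+x'. ennreal (lowrank_P \<phi> \<mu> k x a x') \<partial>M) = 1"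
    using assms(7) kH by blast
  have phi1: "\<And>x a i. \<bar>\<phi> k x a $ i\<bar> \<le> 1" using assms(4) kH by blast
  define dk where "dk = dD k"
  have dkd: "is_density M dk" using assms(13) kH by (simp add: dk_def)
  note dkp = dens_props[OF dkd]
  have dkm[measurable]: "dk \<in> borel_measurable M" by (rule dkp(1))
  define ddk where "ddk = dDd k"
  have ddk_eq: "ddk = Pop M (lowrank_P \<phi> \<mu>) k (\<pi>D k) dk" using assms(14) kH by (simp add: ddk_def dk_def)
  have ddkm[measurable]: "ddk \<in> borel_measurable M"
    unfolding ddk_eq by (rule Pop_meas[where \<phi>=\<phi> and \<mu>=\<mu> and k=k, OF sfM phim mum piDm dkm])
  have ddk0: "\<And>x'. x' \<in> space M \<Longrightarrow> 0 \<le> ddk x'"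
    unfolding ddk_eq by (rule Pop_nonneg) (use P0 piD0 dkp(2) in auto)
  define w where "w = what h"
  have wp: "w \<in> borel_measurable M" "\<And>x. x \<in> space M \<Longrightarrow> 0 \<le> w x"
     "\<And>x. x \<in> space M \<Longrightarrow> \<bar>w x\<bar> \<le> Cx k * Ca k"
    using Wcls_props[OF W] mum unfolding w_def hk by auto
  have wm[measurable]: "w \<in> borel_measurable M" by (rule wp(1))
  define ddh where "ddh = dDdhat k"
  have ddhm[measurable]: "ddh \<in> borel_measurable M"
    using dens_props(1)[OF Fcls_dens[OF Fd]] by (simp add: ddh_def)
  define dDh where "dDh = dDhat k"
  have dDhd: "is_density M dDh"
    using Fg assms(15) Fcls_dens unfolding dDh_def Fcls_gen_def by (auto split: if_splits)
  have dDhm[measurable]: "dDh \<in> borel_measurable M" and dDh0: "\<And>x. x \<in> space M \<Longrightarrow> 0 \<le> dDh x"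
    using dens_props[OF dDhd] by auto
  define dh where "dh = dhat k"
  have dhp: "dh \<in> borel_measurable M \<and> (\<forall>x\<in>space M. 0 \<le> dh x)"
  proof (cases "k = 0")
    case True
    then have "dh = d0" using forc by (simp add: dh_def)
    then show ?thesis using dens_props[OF assms(8)] by auto
  next
    case False
    then have kH': "k \<in> {1..H}" using kH by auto
    have Wk: "what k \<in> Wcls M \<mu> (Cx (k - 1) * Ca (k - 1)) k" and Fk: "dDdhat (k - 1) \<in> Fcls M \<mu> k"
      and dhk: "dhat k = (\<lambda>x. what k x * dDdhat (k - 1) x)"
      using forc kH' by (auto simp: is_arg_max_def is_arg_min_def)
    have "\<mu> (k - 1) \<in> borel_measurable M" using assms(3) kH by simp
    note wk = Wcls_props[OF Wk this]
    note fk = dens_props[OF Fcls_dens[OF Fk]]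
    show ?thesis unfolding dh_def dhk using wk fk by auto
  qed
  have dhm[measurable]: "dh \<in> borel_measurable M" and dh0: "\<And>x. x \<in> space M \<Longrightarrow> 0 \<le> dh x"
    using dhp by auto
  define bd where "bd = bar_d M (lowrank_P \<phi> \<mu>) \<pi> \<pi>D Cx Ca dD d0"
  have bdp: "bd j \<in> borel_measurable M \<and> (\<forall>x\<in>space M. 0 \<le> bd j x)" if "j \<le> k" for j
    using that
  proof (induction j)
    case 0
    then show ?case using dens_props[OF assms(8)] by (simp add: bd_def)
  next
    case (Suc j)
    then have jH: "j < H" using kH by simp
    have IH: "bd j \<in> borel_measurable M" "\<And>x. x \<in> space M \<Longrightarrow> 0 \<le> bd j x" using Suc by auto
    have [measurable]: "\<And>a. (\<lambda>x. \<phi> j x a) \<in> borel_measurable M" using assms(2) jH by blast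
    have [measurable]: "\<mu> j \<in> borel_measurable M" using assms(3) jH by blast
    have polj: "is_policy M (\<pi> j)" "is_policy M (\<pi>D j)" using assms(9,10) jH by auto
    have [measurable]: "\<And>a. (\<lambda>x. \<pi> j x a) \<in> borel_measurable M" "\<And>a. (\<lambda>x. \<pi>D j x a) \<in> borel_measurable M"
      using polj by (auto simp: is_policy_def)
    have cjm: "\<And>a. (\<lambda>x. clip_pol (Ca j) (\<pi> j) (\<pi>D j) x a) \<in> borel_measurable M"
      unfolding clip_pol_def by measurable
    note dj = dens_props[OF assms(13)[OF jH]]
    have [measurable]: "dD j \<in> borel_measurable M" by (rule dj(1))
    have [measurable]: "bd j \<in> borel_measurable M" by (rule IH(1))
    have mm: "(\<lambda>x. min (bd j x) (Cx j * dD j x)) \<in> borel_measurable M" by measurable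
    have eq: "bd (Suc j) = Pop M (lowrank_P \<phi> \<mu>) j (clip_pol (Ca j) (\<pi> j) (\<pi>D j)) (\<lambda>x. min (bd j x) (Cx j * dD j x))"
      by (simp add: bd_def)
    have "bd (Suc j) \<in> borel_measurable M"
      unfolding eq by (rule Pop_meas[where \<phi>=\<phi> and \<mu>=\<mu> and k=j, OF sfM]) (use cjm mm in auto)
    moreover have "\<forall>x\<in>space M. 0 \<le> bd (Suc j) x"
    proof
      fix x' assume x': "x' \<in> space M"
      show "0 \<le> bd (Suc j) x'" unfolding eq
      proof (rule Pop_nonneg)
        show "\<And>x a. x \<in> space M \<Longrightarrow> 0 \<le> lowrank_P \<phi> \<mu> j x a x'" using assms(6) jH x' by blast
        show "\<And>x a. x \<in> space M \<Longrightarrow> 0 \<le> clip_pol (Ca j) (\<pi> j) (\<pi>D j) x a"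
          using polj assms(12) by (auto simp: clip_pol_def is_policy_def)
        show "\<And>x. x \<in> space M \<Longrightarrow> 0 \<le> min (bd j x) (Cx j * dD j x)"
          using IH(2) dj(2) assms(11) by simp
      qed
    qed
    ultimately show ?case by blast
  qed
  define b where "b = bd k"
  have bm[measurable]: "b \<in> borel_measurable M" and b0: "\<And>x. x \<in> space M \<Longrightarrow> 0 \<le> b x"
    using bdp[of k] by (auto simp: b_def)
  have bh: "bd h = Pop M (lowrank_P \<phi> \<mu>) k c (\<lambda>x. min (b x) (Cx k * dk x))"
    by (simp add: hk bd_def b_def c_def dk_def)
  define KC where "KC = (\<lambda>x x'. \<Sum>a\<in>UNIV. lowrank_P \<phi> \<mu> k x a x' * c x a)"
  define KD where "KD = (\<lambda>x x'. \<Sum>a\<in>UNIV. lowrank_P \<phi> \<mu> k x a x' * \<pi>D k x a)"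
  have KCm: "(\<lambda>(x, x'). KC x x') \<in> borel_measurable (M \<Otimes>\<^sub>M M)"
    unfolding KC_def by (rule K_meas[where \<phi>=\<phi> and \<mu>=\<mu> and k=k, OF phim mum cm])
  have KDm: "(\<lambda>(x, x'). KD x x') \<in> borel_measurable (M \<Otimes>\<^sub>M M)"
    unfolding KD_def by (rule K_meas[where \<phi>=\<phi> and \<mu>=\<mu> and k=k, OF phim mum piDm])
  have KCm1[measurable]: "(\<lambda>x. KC x x') \<in> borel_measurable M" for x'
    unfolding KC_def by (rule K_meas1[where \<phi>=\<phi> and \<mu>=\<mu> and k=k, OF phim cm])
  have KDm1[measurable]: "(\<lambda>x. KD x x') \<in> borel_measurable M" for x'
    unfolding KD_def by (rule K_meas1[where \<phi>=\<phi> and \<mu>=\<mu> and k=k, OF phim piDm])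
  have KC0: "\<And>x x'. x \<in> space M \<Longrightarrow> x' \<in> space M \<Longrightarrow> 0 \<le> KC x x'"
    unfolding KC_def using P0 c0 by (auto intro!: sum_nonneg)
  have KD0: "\<And>x x'. x \<in> space M \<Longrightarrow> x' \<in> space M \<Longrightarrow> 0 \<le> KD x x'"
    unfolding KD_def using P0 piD0 by (auto intro!: sum_nonneg)
  have KC1: "\<And>x. x \<in> space M \<Longrightarrow> (\<integral>\<^sup>+x'. ennreal (KC x x') \<partial>M) \<le> 1"
    unfolding KC_def by (rule K_int1[where \<phi>=\<phi> and \<mu>=\<mu> and k=k]) (use mum P0 P1 c0 c1 in auto)
  have KD1: "\<And>x. x \<in> space M \<Longrightarrow> (\<integral>\<^sup>+x'. ennreal (KD x x') \<partial>M) \<le> 1"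
    unfolding KD_def by (rule K_int1[where \<phi>=\<phi> and \<mu>=\<mu> and k=k]) (use mum P0 P1 piD0 piD1' in auto)
  define S where "S = (\<lambda>x'. \<Sum>i\<in>UNIV. \<bar>\<mu> k x' $ i\<bar>)"
  have KCS: "\<And>x x'. x \<in> space M \<Longrightarrow> \<bar>KC x x'\<bar> \<le> S x'"
    unfolding KC_def S_def by (rule K_bound) (use phi1 c0 c1 in auto)
  have KDS: "\<And>x x'. x \<in> space M \<Longrightarrow> \<bar>KD x x'\<bar> \<le> S x'"
    unfolding KD_def S_def by (rule K_bound) (use phi1 piD0 piD1' in auto)
  have Pop_KC: "\<And>f. Pop M (lowrank_P \<phi> \<mu>) k c f = (\<lambda>x'. \<integral>x. KC x x' * f x \<partial>M)"
    by (simp add: Pop_def KC_def fun_eq_iff)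
  have ddk_KD: "ddk = (\<lambda>x'. \<integral>x. KD x x' * dk x \<partial>M)"
    by (simp add: ddk_eq Pop_def KD_def fun_eq_iff)
  define tw where "tw = tilde_w (Cx k) dh dDh"
  have twm[measurable]: "tw \<in> borel_measurable M" unfolding tw_def tilde_w_def by measurable
  have tw0: "\<And>x. x \<in> space M \<Longrightarrow> 0 \<le> tw x" and twC: "\<And>x. x \<in> space M \<Longrightarrow> tw x \<le> Cx k"
  proof -
    fix x assume x: "x \<in> space M"
    show "0 \<le> tw x" using dh0[OF x] dDh0[OF x] assms(11)[of k] by (simp add: tw_def tilde_w_def)
    show "tw x \<le> Cx k"
    proof (cases "dDh x = 0")
      case True then show ?thesis using assms(11)[of k] by (simp add: tw_def tilde_w_def)
    next
      case False
      then have "0 < dDh x" using dDh0[OF x] by simp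
      then show ?thesis by (simp add: tw_def tilde_w_def divide_le_eq)
    qed
  qed
  define f1 where "f1 = (\<lambda>x. dk x * tw x)"
  define g1 where "g1 = (\<lambda>x. min (b x) (Cx k * dk x))"
  have f1m[measurable]: "f1 \<in> borel_measurable M" unfolding f1_def by measurable
  have g1m[measurable]: "g1 \<in> borel_measurable M" unfolding g1_def by measurable
  have f1b: "\<And>x. x \<in> space M \<Longrightarrow> \<bar>f1 x\<bar> \<le> Cx k * dk x"
  proof -
    fix x assume x: "x \<in> space M"
    have "dk x * tw x \<le> dk x * Cx k" using twC[OF x] dkp(2)[OF x] by (rule mult_left_mono)
    then show "\<bar>f1 x\<bar> \<le> Cx k * dk x" unfolding f1_def using tw0[OF x] dkp(2)[OF x]
      by (simp add: abs_mult mult.commute)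
  qed
  have g1b: "\<And>x. x \<in> space M \<Longrightarrow> \<bar>g1 x\<bar> \<le> Cx k * dk x"
  proof -
    fix x assume x: "x \<in> space M"
    have "0 \<le> Cx k * dk x" using dkp(2)[OF x] assms(11)[of k] by simp
    then show "\<bar>g1 x\<bar> \<le> Cx k * dk x" unfolding g1_def using b0[OF x] by (simp add: abs_if min_def)
  qed
  have dkb: "\<And>x. x \<in> space M \<Longrightarrow> \<bar>dk x\<bar> \<le> 1 * dk x" using dkp(2) by simp
  have f1i: "\<And>x'. x' \<in> space M \<Longrightarrow> integrable M (\<lambda>x. KC x x' * f1 x)"
    by (rule K_integrable[OF dkp(3) f1m KCm1 KCS f1b])
  have g1i: "\<And>x'. x' \<in> space M \<Longrightarrow> integrable M (\<lambda>x. KC x x' * g1 x)"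
    by (rule K_integrable[OF dkp(3) g1m KCm1 KCS g1b])
  have dki: "\<And>x'. x' \<in> space M \<Longrightarrow> integrable M (\<lambda>x. KD x x' * dk x)"
    by (rule K_integrable[OF dkp(3) dkm KDm1 KDS dkb])
  define F where "F = Pop M (lowrank_P \<phi> \<mu>) k c f1"
  define G where "G = Pop M (lowrank_P \<phi> \<mu>) k c g1"
  have Fm[measurable]: "F \<in> borel_measurable M"
    unfolding F_def by (rule Pop_meas[where \<phi>=\<phi> and \<mu>=\<mu> and k=k, OF sfM phim mum cm f1m])
  have Gm[measurable]: "G \<in> borel_measurable M"
    unfolding G_def by (rule Pop_meas[where \<phi>=\<phi> and \<mu>=\<mu> and k=k, OF sfM phim mum cm g1m])
  define E where "E = (\<lambda>x'. F x' / ddk x')"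
  have Eeq: "Eop M (lowrank_P \<phi> \<mu>) k c ddk f1 = E" by (simp add: Eop_def E_def F_def fun_eq_iff)
  have Em[measurable]: "E \<in> borel_measurable M" unfolding E_def by measurable
  have Fz: "F x' = 0" if x': "x' \<in> space M" and z: "ddk x' = 0" for x'
  proof -
    have F0: "0 \<le> F x'" unfolding F_def
      by (rule Pop_nonneg) (use P0 x' c0 tw0 dkp(2) in \<open>auto simp: f1_def\<close>)
    have "F x' = (\<integral>x. KC x x' * f1 x \<partial>M)" by (simp add: F_def Pop_KC)
    also have "\<dots> \<le> (\<integral>x. Cx k * Ca k * (KD x x' * dk x) \<partial>M)"
    proof (rule integral_mono[OF f1i[OF x'] integrable_mult_right[OF dki[OF x']]])
      fix x assume x: "x \<in> space M"
      have "KC x x' * tw x = (\<Sum>a\<in>UNIV. lowrank_P \<phi> \<mu> k x a x' * (c x a * tw x))"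
        by (simp add: KC_def sum_distrib_right mult.assoc)
      also have "\<dots> \<le> (\<Sum>a\<in>UNIV. lowrank_P \<phi> \<mu> k x a x' * (Ca k * \<pi>D k x a * Cx k))"
      proof (intro sum_mono mult_left_mono)
        fix a
        show "c x a * tw x \<le> Ca k * \<pi>D k x a * Cx k"
          using cpiD[of x a] twC[OF x] c0[OF x] tw0[OF x] piD0[OF x] assms(12)[of k]
          by (intro mult_mono) auto
        show "0 \<le> lowrank_P \<phi> \<mu> k x a x'" using P0 x x' by blast
      qed
      also have "\<dots> = Cx k * Ca k * KD x x'"
        by (simp add: KD_def sum_distrib_left mult_ac)
      finally have "KC x x' * tw x \<le> Cx k * Ca k * KD x x'" .
      then have "dk x * (KC x x' * tw x) \<le> dk x * (Cx k * Ca k * KD x x')"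
        using dkp(2)[OF x] by (rule mult_left_mono)
      then show "KC x x' * f1 x \<le> Cx k * Ca k * (KD x x' * dk x)"
        by (simp add: f1_def mult_ac)
    qed
    also have "\<dots> = Cx k * Ca k * ddk x'" by (simp add: ddk_KD)
    finally show "F x' = 0" using F0 z by simp
  qed
  have pw: "ennreal \<bar>w x' * ddh x' - G x'\<bar> \<le> ennreal (Cx k * Ca k) * ennreal \<bar>ddh x' - ddk x'\<bar>
      + ennreal (\<bar>w x' - E x'\<bar> * ddk x') + ennreal \<bar>F x' - G x'\<bar>" if x': "x' \<in> space M" for x'
  proof -
    have wE: "w x' * ddk x' - F x' = (w x' - E x') * ddk x'"
      using Fz[OF x'] by (cases "ddk x' = 0") (auto simp: E_def algebra_simps)
    have "\<bar>w x' * (ddh x' - ddk x')\<bar> \<le> Cx k * Ca k * \<bar>ddh x' - ddk x'\<bar>"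
      using wp(3)[OF x'] by (simp add: abs_mult mult_right_mono)
    moreover have "\<bar>(w x' - E x') * ddk x'\<bar> = \<bar>w x' - E x'\<bar> * ddk x'"
      using ddk0[OF x'] by (simp add: abs_mult)
    ultimately have "\<bar>w x' * ddh x' - G x'\<bar> \<le> Cx k * Ca k * \<bar>ddh x' - ddk x'\<bar>
        + \<bar>w x' - E x'\<bar> * ddk x' + \<bar>F x' - G x'\<bar>"
      using wE by (smt (verit) right_diff_distrib)
    then have "ennreal \<bar>w x' * ddh x' - G x'\<bar> \<le> ennreal (Cx k * Ca k * \<bar>ddh x' - ddk x'\<bar>
        + \<bar>w x' - E x'\<bar> * ddk x' + \<bar>F x' - G x'\<bar>)" by (rule ennreal_leI)
    also have "\<dots> = ennreal (Cx k * Ca k) * ennreal \<bar>ddh x' - ddk x'\<bar>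
      + ennreal (\<bar>w x' - E x'\<bar> * ddk x') + ennreal \<bar>F x' - G x'\<bar>"
      using ddk0[OF x'] assms(11)[of k] assms(12)[of k]
      by (simp add: ennreal_plus[symmetric] ennreal_mult[symmetric] del: ennreal_plus)
    finally show ?thesis .
  qed
  have main: "norm1 M (dhat h) (bd h) \<le> norm1 M dh b + ennreal (2 * Cx k) * norm1 M dDh dk
      + ennreal (Cx k * Ca k) * norm1 M ddh ddk
      + ennreal (sqrt 2) * norm2 (density M (\<lambda>x. ennreal (ddk x))) (\<lambda>x'. w x' - E x')"
  proof -
    have Gb: "bd h = G" by (simp add: bh G_def g1_def)
    have A: "(\<integral>\<^sup>+x'. ennreal (Cx k * Ca k) * ennreal \<bar>ddh x' - ddk x'\<bar> \<partial>M)
        = ennreal (Cx k * Ca k) * norm1 M ddh ddk"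
      unfolding norm1_def by (rule nn_integral_cmult) measurable
    have C: "(\<integral>\<^sup>+x'. ennreal \<bar>F x' - G x'\<bar> \<partial>M) \<le> ennreal (2 * Cx k) * norm1 M dDh dk + norm1 M dh b"
    proof -
      have "(\<integral>\<^sup>+x'. ennreal \<bar>F x' - G x'\<bar> \<partial>M) \<le> (\<integral>\<^sup>+x. ennreal \<bar>f1 x - g1 x\<bar> \<partial>M)"
        unfolding F_def G_def Pop_KC
        by (rule kernel_diff[OF sfM KCm KC0 KC1 f1m g1m f1i g1i])
      also have "\<dots> \<le> (\<integral>\<^sup>+x. ennreal (2 * Cx k) * ennreal \<bar>dDh x - dk x\<bar> + ennreal \<bar>dh x - b x\<bar> \<partial>M)"
      proof (rule nn_integral_mono)
        fix x assume x: "x \<in> space M"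
        have "\<bar>f1 x - g1 x\<bar> \<le> 2 * Cx k * \<bar>dDh x - dk x\<bar> + \<bar>dh x - b x\<bar>"
          unfolding f1_def g1_def tw_def tilde_w_def
          by (rule pw_ineq) (use dkp(2)[OF x] dDh0[OF x] dh0[OF x] assms(11)[of k] in auto)
        then have "ennreal \<bar>f1 x - g1 x\<bar> \<le> ennreal (2 * Cx k * \<bar>dDh x - dk x\<bar> + \<bar>dh x - b x\<bar>)"
          by (rule ennreal_leI)
        also have "\<dots> = ennreal (2 * Cx k) * ennreal \<bar>dDh x - dk x\<bar> + ennreal \<bar>dh x - b x\<bar>"
          using assms(11)[of k] by (simp add: ennreal_plus[symmetric] ennreal_mult[symmetric] del: ennreal_plus)
        finally show "ennreal \<bar>f1 x - g1 x\<bar> \<le> ennreal (2 * Cx k) * ennreal \<bar>dDh x - dk x\<bar> + ennreal \<bar>dh x - b x\<bar>" .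
      qed
      also have "\<dots> = ennreal (2 * Cx k) * norm1 M dDh dk + norm1 M dh b"
        unfolding norm1_def by (subst nn_integral_add) (auto intro!: nn_integral_cmult)
      finally show ?thesis .
    qed
    have B: "(\<integral>\<^sup>+x'. ennreal (\<bar>w x' - E x'\<bar> * ddk x') \<partial>M)
        \<le> ennreal (sqrt 2) * norm2 (density M (\<lambda>x. ennreal (ddk x))) (\<lambda>x'. w x' - E x')"
    proof -
      let ?N = "density M (\<lambda>x. ennreal (ddk x))"
      have "(\<integral>\<^sup>+x'. ennreal (\<bar>w x' - E x'\<bar> * ddk x') \<partial>M)
          = (\<integral>\<^sup>+x'. ennreal (ddk x') * ennreal \<bar>w x' - E x'\<bar> \<partial>M)"
        by (rule nn_integral_cong) (use ddk0 in \<open>simp add: ennreal_mult[symmetric] mult.commute\<close>)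
      also have "\<dots> = (\<integral>\<^sup>+x'. ennreal \<bar>w x' - E x'\<bar> \<partial>?N)"
        by (rule nn_integral_density[symmetric]) measurable
      also have "\<dots> \<le> norm2 ?N (\<lambda>x'. w x' - E x')"
        unfolding norm2_def
      proof (rule l1_le_l2)
        show "(\<lambda>x'. w x' - E x') \<in> borel_measurable ?N" by simp
        have "emeasure ?N (space ?N) = (\<integral>\<^sup>+x'. ennreal (ddk x') \<partial>M)"
          by (subst emeasure_density) (auto intro!: nn_integral_cong)
        also have "\<dots> \<le> (\<integral>\<^sup>+x'. (\<integral>\<^sup>+x. ennreal (KD x x') * ennreal (dk x) \<partial>M) \<partial>M)"
        proof (rule nn_integral_mono)
          fix x' assume x': "x' \<in> space M"
          have "ddk x' = enn2real (\<integral>\<^sup>+x. ennreal (KD x x' * dk x) \<partial>M)"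
            unfolding ddk_KD
            by (rule integral_eq_nn_integral) (use KD0 x' dkp(2) in \<open>auto intro!: AE_I2\<close>)
          also have "(\<integral>\<^sup>+x. ennreal (KD x x' * dk x) \<partial>M) = (\<integral>\<^sup>+x. ennreal (KD x x') * ennreal (dk x) \<partial>M)"
            by (rule nn_integral_cong) (use KD0 x' dkp(2) in \<open>simp add: ennreal_mult\<close>)
          finally show "ennreal (ddk x') \<le> (\<integral>\<^sup>+x. ennreal (KD x x') * ennreal (dk x) \<partial>M)"
            by (simp add: ennreal_enn2real_if)
        qed
        also have "\<dots> \<le> (\<integral>\<^sup>+x. ennreal (dk x) \<partial>M)"
          by (rule nn_kernel_tonelli[OF sfM KDm KD1]) measurable
        also have "\<dots> = 1" by (rule dkp(4))
        finally show "emeasure ?N (space ?N) \<le> 1" .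
      qed
      also have "\<dots> \<le> ennreal (sqrt 2) * norm2 ?N (\<lambda>x'. w x' - E x')"
      proof -
        have "(1::ennreal) \<le> ennreal (sqrt 2)" by simp
        then show ?thesis by (metis mult_right_mono mult_1 zero_le)
      qed
      finally show ?thesis .
    qed
    have "norm1 M (dhat h) (bd h) = (\<integral>\<^sup>+x'. ennreal \<bar>w x' * ddh x' - G x'\<bar> \<partial>M)"
      unfolding norm1_def dhh Gb w_def ddh_def ..
    also have "\<dots> \<le> (\<integral>\<^sup>+x'. ennreal (Cx k * Ca k) * ennreal \<bar>ddh x' - ddk x'\<bar>
      + ennreal (\<bar>w x' - E x'\<bar> * ddk x') + ennreal \<bar>F x' - G x'\<bar> \<partial>M)"
      by (rule nn_integral_mono) (rule pw)
    also have "\<dots> = (\<integral>\<^sup>+x'. ennreal (Cx k * Ca k) * ennreal \<bar>ddh x' - ddk x'\<bar> \<partial>M)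
      + (\<integral>\<^sup>+x'. ennreal (\<bar>w x' - E x'\<bar> * ddk x') \<partial>M) + (\<integral>\<^sup>+x'. ennreal \<bar>F x' - G x'\<bar> \<partial>M)"
      by (simp add: nn_integral_add)
    also have "\<dots> \<le> ennreal (Cx k * Ca k) * norm1 M ddh ddk
      + ennreal (sqrt 2) * norm2 (density M (\<lambda>x. ennreal (ddk x))) (\<lambda>x'. w x' - E x')
      + (ennreal (2 * Cx k) * norm1 M dDh dk + norm1 M dh b)"
      unfolding A by (intro add_mono order_refl B C)
    also have "\<dots> = norm1 M dh b + ennreal (2 * Cx k) * norm1 M dDh dk
      + ennreal (Cx k * Ca k) * norm1 M ddh ddk
      + ennreal (sqrt 2) * norm2 (density M (\<lambda>x. ennreal (ddk x))) (\<lambda>x'. w x' - E x')"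
      by (simp add: ac_simps)
    finally show ?thesis .
  qed
  show ?thesis
    using main unfolding k_def[symmetric] bd_def[symmetric] b_def[symmetric] dh_def[symmetric]
      dDh_def[symmetric] dk_def[symmetric] ddk_def[symmetric] ddh_def[symmetric] w_def[symmetric]
      c_def[symmetric] tw_def[symmetric] f1_def[symmetric] Eeq .
qed

end
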